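(* Let $I\subseteq\mathbb{R}$ be an interval, let $f:I\to\mathbb{R}$ be differentiable on the interior $I^{\circ}$, let $a,b\in I^{\circ}$ with $a<b$, assume $f'\in L[a,b]$, and let $\alpha,\lambda\in[0,1]$. Suppose that $|f'|$ is $s$-convex on $[a,b]$ for some fixed $s\in(0,1]$. Define $$I_f(\lambda,\alpha,a,b)=\lambda\big(\alpha f(a)+(1-\alpha)f(b)\big)+(1-\lambda)f(\alpha a+(1-\alpha)b)-\frac{1}{b-a}\int_a^b f(x)\,dx,$$ $$c_1(\alpha,\lambda,s)=(\alpha\lambda)^{s+2}\frac{2}{(s+1)(s+2)}-\alpha\lambda\frac{(1-\alpha)^{s+1}}{s+1}+\frac{(1-\alpha)^{s+2}}{s+2},$$ $$c_2(\alpha,\lambda,s)=(1-\alpha\lambda)^{s+2}\frac{2}{(s+1)(s+2)}-\frac{(1-\alpha\lambda)(1+\alpha^{s+1})}{s+1}+\frac{1+\alpha^{s+2}}{s+2},$$ $$c_3(\alpha,\lambda,s)=\alpha\lambda\frac{(1-\alpha)^{s+1}}{s+1}-\frac{(1-\alpha)^{s+2}}{s+2},\qquad c_4(\alpha,\lambda,s)=\frac{(\alpha\lambda-1)(1-\alpha^{s+1})}{s+1}+\frac{1-\alpha^{s+2}}{s+2}.$$ Then: (i) if $\alpha\lambda\leq 1-\alpha\leq 1-\lambda(1-\alpha)$, $$|I_f(\lambda,\alpha,a,b)|\leq (b-a)\Big[\big(c_1(\alpha,\lambda,s)+c_2(1-\alpha,\lambda,s)\big)|f'(b)|+\big(c_2(\alpha,\lambda,s)+c_1(1-\alpha,\lambda,s)\big)|f'(a)|\Big];$$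 (ii) if $\alpha\lambda\leq 1-\lambda(1-\alpha)\leq 1-\alpha$, $$|I_f(\lambda,\alpha,a,b)|\leq (b-a)\Big[\big(c_1(\alpha,\lambda,s)+c_4(1-\alpha,\lambda,s)\big)|f'(b)|+\big(c_2(\alpha,\lambda,s)+c_3(1-\alpha,\lambda,s)\big)|f'(a)|\Big];$$ (iii) if $1-\alpha\leq\alpha\lambda\leq 1-\lambda(1-\alpha)$, $$|I_f(\lambda,\alpha,a,b)|\leq (b-a)\Big[\big(c_3(\alpha,\lambda,s)+c_2(1-\alpha,\lambda,s)\big)|f'(b)|+\big(c_4(\alpha,\lambda,s)+c_1(1-\alpha,\lambda,s)\big)|f'(a)|\Big].$$
   Context: For a fixed $s\in(0,1]$, a function $g:[a,b]\to[0,\infty)$ is called $s$-convex (in the second sense) on $[a,b]$ if $g(\theta x+(1-\theta)y)\leq \theta^{s}g(x)+(1-\theta)^{s}g(y)$ for all $x,y\in[a,b]$ and all $\theta\in[0,1]$. *)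

theory Defs
  imports "HOL-Analysis.Analysis"
begin

definition s_convex_on :: "real \<Rightarrow> real \<Rightarrow> real \<Rightarrow> (real \<Rightarrow> real) \<Rightarrow> bool" where
  "s_convex_on s a b g \<longleftrightarrow>
     (\<forall>x\<in>{a..b}. g x \<ge> 0) \<and>
     (\<forall>x\<in>{a..b}. \<forall>y\<in>{a..b}. \<forall>\<theta>\<in>{0..1}.
        g (\<theta> * x + (1 - \<theta>) * y) \<le> \<theta> powr s * g x + (1 - \<theta>) powr s * g y)"

definition If_fun :: "(real \<Rightarrow> real) \<Rightarrow> real \<Rightarrow> real \<Rightarrow> real \<Rightarrow> real \<Rightarrow> real" where
  "If_fun f lam \<alpha> a b =
     lam * (\<alpha> * f a + (1 - \<alpha>) * f b) + (1 - lam) * f (\<alpha> * a + (1 - \<alpha>) * b)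
     - (1 / (b - a)) * integral {a..b} f"

definition c1 :: "real \<Rightarrow> real \<Rightarrow> real \<Rightarrow> real" where
  "c1 \<alpha> lam s = (\<alpha> * lam) powr (s + 2) * (2 / ((s + 1) * (s + 2)))
      - \<alpha> * lam * ((1 - \<alpha>) powr (s + 1) / (s + 1)) + (1 - \<alpha>) powr (s + 2) / (s + 2)"

definition c2 :: "real \<Rightarrow> real \<Rightarrow> real \<Rightarrow> real" where
  "c2 \<alpha> lam s = (1 - \<alpha> * lam) powr (s + 2) * (2 / ((s + 1) * (s + 2)))
      - (1 - \<alpha> * lam) * (1 + \<alpha> powr (s + 1)) / (s + 1) + (1 + \<alpha> powr (s + 2)) / (s + 2)"

definition c3 :: "real \<Rightarrow> real \<Rightarrow> real \<Rightarrow> real" where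
  "c3 \<alpha> lam s = \<alpha> * lam * ((1 - \<alpha>) powr (s + 1) / (s + 1)) - (1 - \<alpha>) powr (s + 2) / (s + 2)"

definition c4 :: "real \<Rightarrow> real \<Rightarrow> real \<Rightarrow> real" where
  "c4 \<alpha> lam s = (\<alpha> * lam - 1) * (1 - \<alpha> powr (s + 1)) / (s + 1) + (1 - \<alpha> powr (s + 2)) / (s + 2)"

end

theory Submission
  imports Defs
begin


lemma dpow1:
  fixes a b x r :: real
  assumes "a < b" "0 < (x-a)/(b-a)"
  shows "((\<lambda>x. ((x-a)/(b-a)) powr r) has_real_derivative r * ((x-a)/(b-a)) powr (r-1) * (1/(b-a))) (at x)"
proof -
  have d: "((\<lambda>x. (x-a)/(b-a)) has_real_derivative 1/(b-a)) (at x)"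
    using assms by (auto intro!: derivative_eq_intros)
  show ?thesis using DERIV_chain2[OF has_real_derivative_powr[OF assms(2)] d] by simp
qed

lemma dpow2:
  fixes a b x r :: real
  assumes "a < b" "0 < 1 - (x-a)/(b-a)"
  shows "((\<lambda>x. (1 - (x-a)/(b-a)) powr r) has_real_derivative r * (1 - (x-a)/(b-a)) powr (r-1) * (-1/(b-a))) (at x)"
proof -
  have d: "((\<lambda>x. 1 - (x-a)/(b-a)) has_real_derivative -1/(b-a)) (at x)"
    using assms by (auto intro!: derivative_eq_intros)
  show ?thesis using DERIV_chain2[OF has_real_derivative_powr[OF assms(2)] d] by simp
qed

definition G :: "real \<Rightarrow> real \<Rightarrow> real \<Rightarrow> real \<Rightarrow> real \<Rightarrow> real" where
  "G s p B A u = B*(u powr (s+2)/(s+2) - p*(u powr(s+1)/(s+1)))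
     + A*((1-u) powr (s+2)/(s+2) - (1-p)*((1-u) powr (s+1)/(s+1)))"

lemma alg1: "(d::real) \<noteq> 0 \<Longrightarrow> d*(B*(u*X/d - p*(X/d)) + A*(-((1-u)*Y)/d - (1-p)*(-Y/d))) = (u-p)*(B*X+A*Y)"
  by (simp add: field_simps)

lemma piece:
  fixes a b x0 x1 s p A B :: real
  assumes ab: "a < b" and le: "x0 \<le> x1" and u0: "0 \<le> (x0-a)/(b-a)" and u1: "(x1-a)/(b-a) \<le> 1"
    and s: "0 < s"
  shows "((\<lambda>x. ((x-a)/(b-a) - p) * (B*((x-a)/(b-a)) powr s + A*(1-(x-a)/(b-a)) powr s))
     has_integral (b-a)*(G s p B A ((x1-a)/(b-a)) - G s p B A ((x0-a)/(b-a)))) {x0..x1}"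
proof -
  have ba: "b - a > 0" using ab by simp
  have urange: "0 \<le> (x-a)/(b-a) \<and> (x-a)/(b-a) \<le> 1" if "x \<in> {x0..x1}" for x
  proof -
    have "(x0-a)/(b-a) \<le> (x-a)/(b-a)" "(x-a)/(b-a) \<le> (x1-a)/(b-a)"
      using that ba by (auto simp: divide_right_mono)
    then show ?thesis using u0 u1 by linarith
  qed
  have uopen: "0 < (x-a)/(b-a) \<and> (x-a)/(b-a) < 1" if "x \<in> {x0<..<x1}" for x
  proof -
    have "(x0-a)/(b-a) < (x-a)/(b-a)" "(x-a)/(b-a) < (x1-a)/(b-a)"
      using that ba by (auto simp: divide_strict_right_mono)
    then show ?thesis using u0 u1 by linarith
  qed
  let ?H = "\<lambda>x. (b-a) * G s p B A ((x-a)/(b-a))"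
  have "((\<lambda>x. ((x-a)/(b-a) - p) * (B*((x-a)/(b-a)) powr s + A*(1-(x-a)/(b-a)) powr s))
     has_integral (?H x1 - ?H x0)) {x0..x1}"
  proof (rule fundamental_theorem_of_calculus_interior[OF le])
    show "continuous_on {x0..x1} ?H"
    proof -
      have c1: "continuous_on {x0..x1} (\<lambda>x. ((x-a)/(b-a)) powr r)" if "r > 0" for r
        by (rule continuous_on_powr') (use urange that ba in \<open>auto intro!: continuous_intros\<close>)
      have c2: "continuous_on {x0..x1} (\<lambda>x. (1-(x-a)/(b-a)) powr r)" if "r > 0" for r
        by (rule continuous_on_powr') (use urange that ba in \<open>auto intro!: continuous_intros\<close>)
      show ?thesis unfolding G_def using s
        by (intro continuous_on_add continuous_on_diff continuous_on_mult_left continuous_on_divide continuous_on_const c1 c2) auto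
    qed
  next
    fix x assume x: "x \<in> {x0<..<x1}"
    define u where "u = (x-a)/(b-a)"
    have u: "0 < u" "u < 1" using uopen[OF x] u_def by auto
    have s2: "s+2 \<noteq> 0" "s+1 \<noteq> 0" using s by auto
    have ux: "0 < (x-a)/(b-a)" "0 < 1 - (x-a)/(b-a)" using u unfolding u_def by auto
    have e1: "u powr (s+2-1) = u * u powr s" using u by (simp add: powr_add add_ac)
    have e2: "(1-u) powr (s+2-1) = (1-u) * (1-u) powr s" using u by (simp add: powr_add add_ac)
    have h1: "((\<lambda>x. ((x-a)/(b-a)) powr (s+2) / (s+2)) has_real_derivative u * u powr s / (b-a)) (at x)"
      by (rule DERIV_cong[OF DERIV_cdivide[OF dpow1[OF ab ux(1)]]]) (use s2 e1 in \<open>simp add: u_def[symmetric]\<close>)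
    have h2: "((\<lambda>x. ((x-a)/(b-a)) powr (s+1) / (s+1)) has_real_derivative u powr s / (b-a)) (at x)"
      by (rule DERIV_cong[OF DERIV_cdivide[OF dpow1[OF ab ux(1)]]]) (use s2 in \<open>simp add: u_def[symmetric]\<close>)
    have h3: "((\<lambda>x. (1-(x-a)/(b-a)) powr (s+2) / (s+2)) has_real_derivative -((1-u) * (1-u) powr s) / (b-a)) (at x)"
      by (rule DERIV_cong[OF DERIV_cdivide[OF dpow2[OF ab ux(2)]]]) (use s2 e2 in \<open>simp add: u_def[symmetric]\<close>)
    have h4: "((\<lambda>x. (1-(x-a)/(b-a)) powr (s+1) / (s+1)) has_real_derivative -((1-u) powr s) / (b-a)) (at x)"
      by (rule DERIV_cong[OF DERIV_cdivide[OF dpow2[OF ab ux(2)]]]) (use s2 in \<open>simp add: u_def[symmetric]\<close>)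
    have "(?H has_real_derivative
       (b-a) * (B*(u * u powr s / (b-a) - p*(u powr s / (b-a)))
          + A*(-((1-u) * (1-u) powr s) / (b-a) - (1-p)*(-((1-u) powr s) / (b-a))))) (at x)"
      unfolding G_def
      by (intro DERIV_cmult DERIV_add DERIV_diff h1 h2 h3 h4)
    moreover have "(b-a) * (B*(u * u powr s / (b-a) - p*(u powr s / (b-a)))
          + A*(-((1-u) * (1-u) powr s) / (b-a) - (1-p)*(-((1-u) powr s) / (b-a))))
       = (u - p) * (B*u powr s + A*(1-u) powr s)"
      using alg1[of "b-a"] ba by simp
    ultimately show "(?H has_vector_derivative ((x-a)/(b-a) - p) * (B*((x-a)/(b-a)) powr s + A*(1-(x-a)/(b-a)) powr s)) (at x)"
      by (simp add: u_def has_real_derivative_iff_has_vector_derivative)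
  qed
  then show ?thesis by (simp add: algebra_simps)
qed


definition "Gp t1 t2 p B A u U V = B*(t1*u^2*U - t2*p*u*U) + A*(t1*(1-u)^2*V - t2*(1-p)*(1-u)*(V::real))"
definition "c1p t1 t2 al lam X Y = 2*(al*lam)^2*X - t2*al*lam*(1-al)*Y + t1*(1-al)^2*(Y::real)"
definition "c2p t1 t2 al lam X Y = 2*(1-al*lam)^2*X - t2*(1-al*lam)*(1+al*Y) + t1*(1+al^2*(Y::real))"
definition "c3p t1 t2 al lam Y = t2*al*lam*(1-al)*Y - t1*(1-al)^2*(Y::real)"
definition "c4p t1 t2 al lam Y = t2*(al*lam-1)*(1-al*Y) + t1*(1-al^2*(Y::real))"

lemma pw2: "0 \<le> (x::real) \<Longrightarrow> x powr (s+2) = x^2 * x powr s"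
  by (simp add: powr_add mult.commute)
lemma pw1: "0 \<le> (x::real) \<Longrightarrow> x powr (s+1) = x * x powr s"
  by (simp add: powr_add powr_one mult.commute)

lemma Gconv: "0 < s \<Longrightarrow> 0 \<le> v \<Longrightarrow> v \<le> 1 \<Longrightarrow>
   G s p B A v = Gp (s+1) (s+2) p B A v (v powr s) ((1-v) powr s) / ((s+1)*(s+2))"
proof -
  assume a: "0 < s" "0 \<le> v" "v \<le> 1"
  define t1 where "t1 = s+1"
  define t2 where "t2 = s+2"
  have nz: "t1 \<noteq> 0" "t2 \<noteq> 0" using a by (auto simp: t1_def t2_def)
  have v1: "0 \<le> 1 - v" using a by auto
  show ?thesis unfolding G_def Gp_def
    apply (simp only: pw1[OF a(2)] pw2[OF a(2)] pw1[OF v1] pw2[OF v1])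
    apply (simp only: t1_def[symmetric] t2_def[symmetric])
    using nz by (simp add: field_simps)
qed
lemma c1conv: "0 < s \<Longrightarrow> 0 \<le> al*lam \<Longrightarrow> 0 \<le> 1-al \<Longrightarrow>
   c1 al lam s = c1p (s+1) (s+2) al lam ((al*lam) powr s) ((1-al) powr s) / ((s+1)*(s+2))"
proof -
  assume a: "0 < s" "0 \<le> al*lam" "0 \<le> 1-al"
  define t1 where "t1 = s+1"
  define t2 where "t2 = s+2"
  have nz: "t1 \<noteq> 0" "t2 \<noteq> 0" using a by (auto simp: t1_def t2_def)
  show ?thesis unfolding c1_def c1p_def
    apply (simp only: pw1[OF a(2)] pw2[OF a(2)] pw1[OF a(3)] pw2[OF a(3)])
    apply (simp only: t1_def[symmetric] t2_def[symmetric])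
    using nz by (simp add: field_simps)
qed
lemma c2conv: "0 < s \<Longrightarrow> 0 \<le> 1-al*lam \<Longrightarrow> 0 \<le> al \<Longrightarrow>
   c2 al lam s = c2p (s+1) (s+2) al lam ((1-al*lam) powr s) (al powr s) / ((s+1)*(s+2))"
proof -
  assume a: "0 < s" "0 \<le> 1-al*lam" "0 \<le> al"
  define t1 where "t1 = s+1"
  define t2 where "t2 = s+2"
  have nz: "t1 \<noteq> 0" "t2 \<noteq> 0" using a by (auto simp: t1_def t2_def)
  show ?thesis unfolding c2_def c2p_def
    apply (simp only: pw1[OF a(2)] pw2[OF a(2)] pw1[OF a(3)] pw2[OF a(3)])
    apply (simp only: t1_def[symmetric] t2_def[symmetric])
    using nz by (simp add: field_simps)
qed
lemma c3conv: "0 < s \<Longrightarrow> 0 \<le> 1-al \<Longrightarrow>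
   c3 al lam s = c3p (s+1) (s+2) al lam ((1-al) powr s) / ((s+1)*(s+2))"
proof -
  assume a: "0 < s" "0 \<le> 1-al"
  define t1 where "t1 = s+1"
  define t2 where "t2 = s+2"
  have nz: "t1 \<noteq> 0" "t2 \<noteq> 0" using a by (auto simp: t1_def t2_def)
  show ?thesis unfolding c3_def c3p_def
    apply (simp only: pw1[OF a(2)] pw2[OF a(2)])
    apply (simp only: t1_def[symmetric] t2_def[symmetric])
    using nz by (simp add: field_simps)
qed
lemma c4conv: "0 < s \<Longrightarrow> 0 \<le> al \<Longrightarrow>
   c4 al lam s = c4p (s+1) (s+2) al lam (al powr s) / ((s+1)*(s+2))"
proof -
  assume a: "0 < s" "0 \<le> al"
  define t1 where "t1 = s+1"
  define t2 where "t2 = s+2"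
  have nz: "t1 \<noteq> 0" "t2 \<noteq> 0" using a by (auto simp: t1_def t2_def)
  show ?thesis unfolding c4_def c4p_def
    apply (simp only: pw1[OF a(2)] pw2[OF a(2)])
    apply (simp only: t1_def[symmetric] t2_def[symmetric])
    using nz by (simp add: field_simps)
qed

lemma core_i_poly:
  fixes t1 t2 :: real assumes "t2 = t1 + 1"
  shows "-(Gp t1 t2 (\<alpha>*lam) B A (\<alpha>*lam) Pp1 Qp1 - Gp t1 t2 (\<alpha>*lam) B A 0 0 1) + (Gp t1 t2 (\<alpha>*lam) B A (1-\<alpha>) Pc Qc - Gp t1 t2 (\<alpha>*lam) B A (\<alpha>*lam) Pp1 Qp1) - (Gp t1 t2 (1-lam*(1-\<alpha>)) B A (1-lam*(1-\<alpha>)) Pp2 Qp2 - Gp t1 t2 (1-lam*(1-\<alpha>)) B A (1-\<alpha>) Pc Qc) + (Gp t1 t2 (1-lam*(1-\<alpha>)) B A 1 1 0 - Gp t1 t2 (1-lam*(1-\<alpha>)) B A (1-lam*(1-\<alpha>)) Pp2 Qp2) = (c1p t1 t2 \<alpha> lam Pp1 Pc + c2p t1 t2 (1-\<alpha>) lam Pp2 Pc)*B + (c2p t1 t2 \<alpha> lam Qp1 Qc + c1p t1 t2 (1-\<alpha>) lam Qp2 Qc)*A"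
  unfolding Gp_def c1p_def c2p_def c3p_def c4p_def assms
  by (simp add: algebra_simps power2_eq_square)

lemma core_i:
  fixes t1 t2 :: real assumes "t1 \<noteq> 0" "t2 \<noteq> 0" "t2 = t1 + 1"
  shows "-((Gp t1 t2 (\<alpha>*lam) B A (\<alpha>*lam) Pp1 Qp1/(t1*t2)) - (Gp t1 t2 (\<alpha>*lam) B A 0 0 1/(t1*t2))) + ((Gp t1 t2 (\<alpha>*lam) B A (1-\<alpha>) Pc Qc/(t1*t2)) - (Gp t1 t2 (\<alpha>*lam) B A (\<alpha>*lam) Pp1 Qp1/(t1*t2))) - ((Gp t1 t2 (1-lam*(1-\<alpha>)) B A (1-lam*(1-\<alpha>)) Pp2 Qp2/(t1*t2)) - (Gp t1 t2 (1-lam*(1-\<alpha>)) B A (1-\<alpha>) Pc Qc/(t1*t2))) + ((Gp t1 t2 (1-lam*(1-\<alpha>)) B A 1 1 0/(t1*t2)) - (Gp t1 t2 (1-lam*(1-\<alpha>)) B A (1-lam*(1-\<alpha>)) Pp2 Qp2/(t1*t2))) = ((c1p t1 t2 \<alpha> lam Pp1 Pc/(t1*t2)) + (c2p t1 t2 (1-\<alpha>) lam Pp2 Pc/(t1*t2)))*B + ((c2p t1 t2 \<alpha> lam Qp1 Qc/(t1*t2)) + (c1p t1 t2 (1-\<alpha>) lam Qp2 Qc/(t1*t2)))*A"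
proof -
  have "-((Gp t1 t2 (\<alpha>*lam) B A (\<alpha>*lam) Pp1 Qp1/(t1*t2)) - (Gp t1 t2 (\<alpha>*lam) B A 0 0 1/(t1*t2))) + ((Gp t1 t2 (\<alpha>*lam) B A (1-\<alpha>) Pc Qc/(t1*t2)) - (Gp t1 t2 (\<alpha>*lam) B A (\<alpha>*lam) Pp1 Qp1/(t1*t2))) - ((Gp t1 t2 (1-lam*(1-\<alpha>)) B A (1-lam*(1-\<alpha>)) Pp2 Qp2/(t1*t2)) - (Gp t1 t2 (1-lam*(1-\<alpha>)) B A (1-\<alpha>) Pc Qc/(t1*t2))) + ((Gp t1 t2 (1-lam*(1-\<alpha>)) B A 1 1 0/(t1*t2)) - (Gp t1 t2 (1-lam*(1-\<alpha>)) B A (1-lam*(1-\<alpha>)) Pp2 Qp2/(t1*t2))) = (-(Gp t1 t2 (\<alpha>*lam) B A (\<alpha>*lam) Pp1 Qp1 - Gp t1 t2 (\<alpha>*lam) B A 0 0 1) + (Gp t1 t2 (\<alpha>*lam) B A (1-\<alpha>) Pc Qc - Gp t1 t2 (\<alpha>*lam) B A (\<alpha>*lam) Pp1 Qp1) - (Gp t1 t2 (1-lam*(1-\<alpha>)) B A (1-lam*(1-\<alpha>)) Pp2 Qp2 - Gp t1 t2 (1-lam*(1-\<alpha>)) B A (1-\<alpha>) Pc Qc) + (Gp t1 t2 (1-lam*(1-\<alpha>)) B A 1 1 0 - Gp t1 t2 (1-lam*(1-\<alpha>)) B A (1-lam*(1-\<alpha>)) Pp2 Qp2))/(t1*t2)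"
    using assms(1,2) by (simp add: field_simps)
  also have "\<dots> = ((c1p t1 t2 \<alpha> lam Pp1 Pc + c2p t1 t2 (1-\<alpha>) lam Pp2 Pc)*B + (c2p t1 t2 \<alpha> lam Qp1 Qc + c1p t1 t2 (1-\<alpha>) lam Qp2 Qc)*A)/(t1*t2)"
    using core_i_poly[OF assms(3)] by simp
  also have "\<dots> = ((c1p t1 t2 \<alpha> lam Pp1 Pc/(t1*t2)) + (c2p t1 t2 (1-\<alpha>) lam Pp2 Pc/(t1*t2)))*B + ((c2p t1 t2 \<alpha> lam Qp1 Qc/(t1*t2)) + (c1p t1 t2 (1-\<alpha>) lam Qp2 Qc/(t1*t2)))*A"
    using assms(1,2) by (simp add: field_simps)
  finally show ?thesis .
qed

lemma core_ii_poly: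
  fixes t1 t2 :: real assumes "t2 = t1 + 1"
  shows "-(Gp t1 t2 (\<alpha>*lam) B A (\<alpha>*lam) Pp1 Qp1 - Gp t1 t2 (\<alpha>*lam) B A 0 0 1) + (Gp t1 t2 (\<alpha>*lam) B A (1-\<alpha>) Pc Qc - Gp t1 t2 (\<alpha>*lam) B A (\<alpha>*lam) Pp1 Qp1) + (Gp t1 t2 (1-lam*(1-\<alpha>)) B A 1 1 0 - Gp t1 t2 (1-lam*(1-\<alpha>)) B A (1-\<alpha>) Pc Qc) = (c1p t1 t2 \<alpha> lam Pp1 Pc + c4p t1 t2 (1-\<alpha>) lam Pc)*B + (c2p t1 t2 \<alpha> lam Qp1 Qc + c3p t1 t2 (1-\<alpha>) lam Qc)*A"
  unfolding Gp_def c1p_def c2p_def c3p_def c4p_def assms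
  by (simp add: algebra_simps power2_eq_square)

lemma core_ii:
  fixes t1 t2 :: real assumes "t1 \<noteq> 0" "t2 \<noteq> 0" "t2 = t1 + 1"
  shows "-((Gp t1 t2 (\<alpha>*lam) B A (\<alpha>*lam) Pp1 Qp1/(t1*t2)) - (Gp t1 t2 (\<alpha>*lam) B A 0 0 1/(t1*t2))) + ((Gp t1 t2 (\<alpha>*lam) B A (1-\<alpha>) Pc Qc/(t1*t2)) - (Gp t1 t2 (\<alpha>*lam) B A (\<alpha>*lam) Pp1 Qp1/(t1*t2))) + ((Gp t1 t2 (1-lam*(1-\<alpha>)) B A 1 1 0/(t1*t2)) - (Gp t1 t2 (1-lam*(1-\<alpha>)) B A (1-\<alpha>) Pc Qc/(t1*t2))) = ((c1p t1 t2 \<alpha> lam Pp1 Pc/(t1*t2)) + (c4p t1 t2 (1-\<alpha>) lam Pc/(t1*t2)))*B + ((c2p t1 t2 \<alpha> lam Qp1 Qc/(t1*t2)) + (c3p t1 t2 (1-\<alpha>) lam Qc/(t1*t2)))*A"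
proof -
  have "-((Gp t1 t2 (\<alpha>*lam) B A (\<alpha>*lam) Pp1 Qp1/(t1*t2)) - (Gp t1 t2 (\<alpha>*lam) B A 0 0 1/(t1*t2))) + ((Gp t1 t2 (\<alpha>*lam) B A (1-\<alpha>) Pc Qc/(t1*t2)) - (Gp t1 t2 (\<alpha>*lam) B A (\<alpha>*lam) Pp1 Qp1/(t1*t2))) + ((Gp t1 t2 (1-lam*(1-\<alpha>)) B A 1 1 0/(t1*t2)) - (Gp t1 t2 (1-lam*(1-\<alpha>)) B A (1-\<alpha>) Pc Qc/(t1*t2))) = (-(Gp t1 t2 (\<alpha>*lam) B A (\<alpha>*lam) Pp1 Qp1 - Gp t1 t2 (\<alpha>*lam) B A 0 0 1) + (Gp t1 t2 (\<alpha>*lam) B A (1-\<alpha>) Pc Qc - Gp t1 t2 (\<alpha>*lam) B A (\<alpha>*lam) Pp1 Qp1) + (Gp t1 t2 (1-lam*(1-\<alpha>)) B A 1 1 0 - Gp t1 t2 (1-lam*(1-\<alpha>)) B A (1-\<alpha>) Pc Qc))/(t1*t2)"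
    using assms(1,2) by (simp add: field_simps)
  also have "\<dots> = ((c1p t1 t2 \<alpha> lam Pp1 Pc + c4p t1 t2 (1-\<alpha>) lam Pc)*B + (c2p t1 t2 \<alpha> lam Qp1 Qc + c3p t1 t2 (1-\<alpha>) lam Qc)*A)/(t1*t2)"
    using core_ii_poly[OF assms(3)] by simp
  also have "\<dots> = ((c1p t1 t2 \<alpha> lam Pp1 Pc/(t1*t2)) + (c4p t1 t2 (1-\<alpha>) lam Pc/(t1*t2)))*B + ((c2p t1 t2 \<alpha> lam Qp1 Qc/(t1*t2)) + (c3p t1 t2 (1-\<alpha>) lam Qc/(t1*t2)))*A"
    using assms(1,2) by (simp add: field_simps)
  finally show ?thesis .
qed

lemma core_iii_poly:
  fixes t1 t2 :: real assumes "t2 = t1 + 1"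
  shows "-(Gp t1 t2 (\<alpha>*lam) B A (1-\<alpha>) Pc Qc - Gp t1 t2 (\<alpha>*lam) B A 0 0 1) - (Gp t1 t2 (1-lam*(1-\<alpha>)) B A (1-lam*(1-\<alpha>)) Pp2 Qp2 - Gp t1 t2 (1-lam*(1-\<alpha>)) B A (1-\<alpha>) Pc Qc) + (Gp t1 t2 (1-lam*(1-\<alpha>)) B A 1 1 0 - Gp t1 t2 (1-lam*(1-\<alpha>)) B A (1-lam*(1-\<alpha>)) Pp2 Qp2) = (c3p t1 t2 \<alpha> lam Pc + c2p t1 t2 (1-\<alpha>) lam Pp2 Pc)*B + (c4p t1 t2 \<alpha> lam Qc + c1p t1 t2 (1-\<alpha>) lam Qp2 Qc)*A"
  unfolding Gp_def c1p_def c2p_def c3p_def c4p_def assms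
  by (simp add: algebra_simps power2_eq_square)

lemma core_iii:
  fixes t1 t2 :: real assumes "t1 \<noteq> 0" "t2 \<noteq> 0" "t2 = t1 + 1"
  shows "-((Gp t1 t2 (\<alpha>*lam) B A (1-\<alpha>) Pc Qc/(t1*t2)) - (Gp t1 t2 (\<alpha>*lam) B A 0 0 1/(t1*t2))) - ((Gp t1 t2 (1-lam*(1-\<alpha>)) B A (1-lam*(1-\<alpha>)) Pp2 Qp2/(t1*t2)) - (Gp t1 t2 (1-lam*(1-\<alpha>)) B A (1-\<alpha>) Pc Qc/(t1*t2))) + ((Gp t1 t2 (1-lam*(1-\<alpha>)) B A 1 1 0/(t1*t2)) - (Gp t1 t2 (1-lam*(1-\<alpha>)) B A (1-lam*(1-\<alpha>)) Pp2 Qp2/(t1*t2))) = ((c3p t1 t2 \<alpha> lam Pc/(t1*t2)) + (c2p t1 t2 (1-\<alpha>) lam Pp2 Pc/(t1*t2)))*B + ((c4p t1 t2 \<alpha> lam Qc/(t1*t2)) + (c1p t1 t2 (1-\<alpha>) lam Qp2 Qc/(t1*t2)))*A"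
proof -
  have "-((Gp t1 t2 (\<alpha>*lam) B A (1-\<alpha>) Pc Qc/(t1*t2)) - (Gp t1 t2 (\<alpha>*lam) B A 0 0 1/(t1*t2))) - ((Gp t1 t2 (1-lam*(1-\<alpha>)) B A (1-lam*(1-\<alpha>)) Pp2 Qp2/(t1*t2)) - (Gp t1 t2 (1-lam*(1-\<alpha>)) B A (1-\<alpha>) Pc Qc/(t1*t2))) + ((Gp t1 t2 (1-lam*(1-\<alpha>)) B A 1 1 0/(t1*t2)) - (Gp t1 t2 (1-lam*(1-\<alpha>)) B A (1-lam*(1-\<alpha>)) Pp2 Qp2/(t1*t2))) = (-(Gp t1 t2 (\<alpha>*lam) B A (1-\<alpha>) Pc Qc - Gp t1 t2 (\<alpha>*lam) B A 0 0 1) - (Gp t1 t2 (1-lam*(1-\<alpha>)) B A (1-lam*(1-\<alpha>)) Pp2 Qp2 - Gp t1 t2 (1-lam*(1-\<alpha>)) B A (1-\<alpha>) Pc Qc) + (Gp t1 t2 (1-lam*(1-\<alpha>)) B A 1 1 0 - Gp t1 t2 (1-lam*(1-\<alpha>)) B A (1-lam*(1-\<alpha>)) Pp2 Qp2))/(t1*t2)"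
    using assms(1,2) by (simp add: field_simps)
  also have "\<dots> = ((c3p t1 t2 \<alpha> lam Pc + c2p t1 t2 (1-\<alpha>) lam Pp2 Pc)*B + (c4p t1 t2 \<alpha> lam Qc + c1p t1 t2 (1-\<alpha>) lam Qp2 Qc)*A)/(t1*t2)"
    using core_iii_poly[OF assms(3)] by simp
  also have "\<dots> = ((c3p t1 t2 \<alpha> lam Pc/(t1*t2)) + (c2p t1 t2 (1-\<alpha>) lam Pp2 Pc/(t1*t2)))*B + ((c4p t1 t2 \<alpha> lam Qc/(t1*t2)) + (c1p t1 t2 (1-\<alpha>) lam Qp2 Qc/(t1*t2)))*A"
    using assms(1,2) by (simp add: field_simps)
  finally show ?thesis .
qed


lemma ibp:
  fixes f f' :: "real \<Rightarrow> real"
  assumes le: "x0 \<le> x1" and d: "\<And>x. x \<in> {x0..x1} \<Longrightarrow> (f has_real_derivative f' x) (at x)"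
  shows "((\<lambda>x. (m*x+q) * f' x) has_integral
          ((m*x1+q)*f x1 - (m*x0+q)*f x0 - m * integral {x0..x1} f)) {x0..x1}"
proof -
  have cont: "continuous_on {x0..x1} f"
    using d by (meson DERIV_continuous continuous_at_imp_continuous_on)
  have "((\<lambda>x. m * f x + (m*x+q) * f' x) has_integral ((m*x1+q)*f x1 - (m*x0+q)*f x0)) {x0..x1}"
  proof (rule fundamental_theorem_of_calculus[OF le])
    fix x assume x: "x \<in> {x0..x1}"
    have "((\<lambda>x. (m*x+q)*f x) has_real_derivative (m * f x + (m*x+q) * f' x)) (at x)"
      using d[OF x] by (auto intro!: derivative_eq_intros)
    then show "((\<lambda>x. (m*x+q)*f x) has_vector_derivative (m * f x + (m*x+q) * f' x)) (at x within {x0..x1})"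
      by (simp add: has_real_derivative_iff_has_vector_derivative has_vector_derivative_at_within)
  qed
  moreover have "((\<lambda>x. m * f x) has_integral m * integral {x0..x1} f) {x0..x1}"
    using integrable_continuous_interval[OF cont]
    by (simp add: has_integral_mult_right integrable_integral)
  ultimately have "((\<lambda>x. (m * f x + (m*x+q) * f' x) - m * f x) has_integral
      ((m*x1+q)*f x1 - (m*x0+q)*f x0 - m * integral {x0..x1} f)) {x0..x1}"
    by (rule has_integral_diff)
  then show ?thesis by simp
qed

lemma ibp2:
  fixes f f' :: "real \<Rightarrow> real"
  assumes u: "u = (\<lambda>x. (x-a)/(b-a))"
    and le: "x0 \<le> x1" and d: "\<And>x. x \<in> {x0..x1} \<Longrightarrow> (f has_real_derivative f' x) (at x)"
  shows "((\<lambda>x. (u x - p) * f' x) has_integral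
          ((u x1 - p)*f x1 - (u x0 - p)*f x0 - (1/(b-a)) * integral {x0..x1} f)) {x0..x1}"
proof -
  have eq: "1/(b-a)*x + (-a/(b-a)-p) = u x - p" for x
    unfolding u by (simp add: diff_divide_distrib)
  show ?thesis using ibp[OF le d, of "1/(b-a)" "-a/(b-a)-p"] unfolding eq by simp
qed

lemma absbound:
  fixes k g h :: "real \<Rightarrow> real"
  assumes "((\<lambda>x. k x * g x) has_integral V) S" "((\<lambda>x. \<bar>k x\<bar> * h x) has_integral W) S"
    "\<And>x. x \<in> S \<Longrightarrow> \<bar>g x\<bar> \<le> h x"
  shows "\<bar>V\<bar> \<le> W"
proof -
  have "norm (integral S (\<lambda>x. k x * g x)) \<le> integral S (\<lambda>x. \<bar>k x\<bar> * h x)"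
  proof (rule integral_norm_bound_integral)
    show "(\<lambda>x. k x * g x) integrable_on S" "(\<lambda>x. \<bar>k x\<bar> * h x) integrable_on S"
      using assms(1,2) by blast+
    fix x assume "x \<in> S"
    then show "norm (k x * g x) \<le> \<bar>k x\<bar> * h x"
      using assms(3) by (simp add: abs_mult mult_left_mono)
  qed
  then show ?thesis using assms(1,2) by (simp add: integral_unique)
qed

lemma pos_piece:
  fixes a b x0 x1 s p A B :: real
  assumes u: "u = (\<lambda>x. (x-a)/(b-a))"
    and ab: "a < b" and le: "x0 \<le> x1" and u0: "0 \<le> u x0" and u1: "u x1 \<le> 1"
    and s: "0 < s" and pu: "p \<le> u x0"
  shows "((\<lambda>x. \<bar>u x - p\<bar> * (B * (u x) powr s + A * (1 - u x) powr s))
     has_integral (b-a)*(G s p B A (u x1) - G s p B A (u x0))) {x0..x1}"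
proof -
  have ux: "\<And>x. u x = (x-a)/(b-a)" using u by simp
  have u0': "0 \<le> (x0-a)/(b-a)" using u0 by (simp only: ux)
  have u1': "(x1-a)/(b-a) \<le> 1" using u1 by (simp only: ux)
  have pu': "p \<le> (x0-a)/(b-a)" using pu by (simp only: ux)
  note P = piece[OF ab le u0' u1' s, of p B A]
  show ?thesis unfolding ux
  proof (rule has_integral_eq[OF _ P])
    fix x assume x: "x \<in> {x0..x1}"
    have "(x0-a)/(b-a) \<le> (x-a)/(b-a)" using x ab by (auto simp: divide_right_mono)
    then have "0 \<le> (x-a)/(b-a) - p" using pu' by linarith
    then show "((x-a)/(b-a) - p) * (B*((x-a)/(b-a)) powr s + A*(1-(x-a)/(b-a)) powr s) =
       \<bar>(x-a)/(b-a) - p\<bar> * (B*((x-a)/(b-a)) powr s + A*(1-(x-a)/(b-a)) powr s)"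
      by (simp only: abs_of_nonneg)
  qed
qed

lemma neg_piece:
  fixes a b x0 x1 s p A B :: real
  assumes u: "u = (\<lambda>x. (x-a)/(b-a))"
    and ab: "a < b" and le: "x0 \<le> x1" and u0: "0 \<le> u x0" and u1: "u x1 \<le> 1"
    and s: "0 < s" and pu: "u x1 \<le> p"
  shows "((\<lambda>x. \<bar>u x - p\<bar> * (B * (u x) powr s + A * (1 - u x) powr s))
     has_integral -((b-a)*(G s p B A (u x1) - G s p B A (u x0)))) {x0..x1}"
proof -
  have ux: "\<And>x. u x = (x-a)/(b-a)" using u by simp
  have u0': "0 \<le> (x0-a)/(b-a)" using u0 by (simp only: ux)
  have u1': "(x1-a)/(b-a) \<le> 1" using u1 by (simp only: ux)
  have pu': "(x1-a)/(b-a) \<le> p" using pu by (simp only: ux)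
  note P = has_integral_neg[OF piece[OF ab le u0' u1' s, of p B A]]
  show ?thesis unfolding ux
  proof (rule has_integral_eq[OF _ P])
    fix x assume x: "x \<in> {x0..x1}"
    have "(x-a)/(b-a) \<le> (x1-a)/(b-a)" using x ab by (auto simp: divide_right_mono)
    then have "(x-a)/(b-a) - p \<le> 0" using pu' by linarith
    then have "\<bar>(x-a)/(b-a) - p\<bar> = -((x-a)/(b-a) - p)" by (simp only: abs_of_nonpos)
    then show "-(((x-a)/(b-a) - p) * (B*((x-a)/(b-a)) powr s + A*(1-(x-a)/(b-a)) powr s)) =
       \<bar>(x-a)/(b-a) - p\<bar> * (B*((x-a)/(b-a)) powr s + A*(1-(x-a)/(b-a)) powr s)"
      by (simp only: mult_minus_left)
  qed
qed

lemma ieq_alg: "lam*(al*fa + (1-al)*fb) + (1-lam)*fc - k*(I1+I2) = (((1-al) - al*lam)*fc - (0 - al*lam)*fa - k*I1) + ((1 - (1-lam*(1-al)))*fb - ((1-al) - (1-lam*(1-al)))*fc - k*(I2::real))"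
  by (simp add: algebra_simps)

theorem mainTheorem2:
  fixes I :: "real set" and f f' :: "real \<Rightarrow> real" and a b \<alpha> lam s :: real
  assumes "is_interval I"
    and "\<And>x. x \<in> interior I \<Longrightarrow> (f has_real_derivative f' x) (at x)"
    and "a \<in> interior I" and "b \<in> interior I" and "a < b"
    and "f' absolutely_integrable_on {a..b}"
    and "\<alpha> \<in> {0..1}" and "lam \<in> {0..1}"
    and "s \<in> {0<..1}"
    and "s_convex_on s a b (\<lambda>x. \<bar>f' x\<bar>)"
  shows "(\<alpha> * lam \<le> 1 - \<alpha> \<and> 1 - \<alpha> \<le> 1 - lam * (1 - \<alpha>) \<longrightarrow>
           \<bar>If_fun f lam \<alpha> a b\<bar> \<le> (b - a) *
             ((c1 \<alpha> lam s + c2 (1 - \<alpha>) lam s) * \<bar>f' b\<bar> + (c2 \<alpha> lam s + c1 (1 - \<alpha>) lam s) * \<bar>f' a\<bar>))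
       \<and> (\<alpha> * lam \<le> 1 - lam * (1 - \<alpha>) \<and> 1 - lam * (1 - \<alpha>) \<le> 1 - \<alpha> \<longrightarrow>
           \<bar>If_fun f lam \<alpha> a b\<bar> \<le> (b - a) *
             ((c1 \<alpha> lam s + c4 (1 - \<alpha>) lam s) * \<bar>f' b\<bar> + (c2 \<alpha> lam s + c3 (1 - \<alpha>) lam s) * \<bar>f' a\<bar>))
       \<and> (1 - \<alpha> \<le> \<alpha> * lam \<and> \<alpha> * lam \<le> 1 - lam * (1 - \<alpha>) \<longrightarrow>
           \<bar>If_fun f lam \<alpha> a b\<bar> \<le> (b - a) *
             ((c3 \<alpha> lam s + c2 (1 - \<alpha>) lam s) * \<bar>f' b\<bar> + (c4 \<alpha> lam s + c1 (1 - \<alpha>) lam s) * \<bar>f' a\<bar>))"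
  proof -
  have ab: "a < b" using assms(5) .
  have ba: "0 < b - a" using ab by simp
  have s0: "0 < s" using assms(9) by simp
  have al0: "0 \<le> \<alpha>" and al1: "\<alpha> \<le> 1" using assms(7) by auto
  have la0: "0 \<le> lam" and la1: "lam \<le> 1" using assms(8) by auto
  have sub: "{a..b} \<subseteq> interior I"
  proof -
    have "convex (interior I)" using assms(1) by (simp add: is_interval_convex)
    then have "closed_segment a b \<subseteq> interior I" using assms(3,4) closed_segment_subset by blast
    then show ?thesis using ab by (simp add: closed_segment_eq_real_ivl)
  qed
  have der: "\<And>x. x \<in> {a..b} \<Longrightarrow> (f has_real_derivative f' x) (at x)"
    using sub assms(2) by blast
  have fcont: "continuous_on {a..b} f"
    using der by (meson DERIV_continuous continuous_at_imp_continuous_on)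
  define A where "A = \<bar>f' a\<bar>"
  define B where "B = \<bar>f' b\<bar>"
  define u where "u = (\<lambda>x::real. (x-a)/(b-a))"
  define h where "h = (\<lambda>x. B * (u x) powr s + A * (1 - u x) powr s)"
  have sc: "\<And>x y \<theta>. x \<in> {a..b} \<Longrightarrow> y \<in> {a..b} \<Longrightarrow> \<theta> \<in> {0..1} \<Longrightarrow>
      \<bar>f' (\<theta>*x+(1-\<theta>)*y)\<bar> \<le> \<theta> powr s * \<bar>f' x\<bar> + (1-\<theta>) powr s * \<bar>f' y\<bar>"
    using assms(10) unfolding s_convex_on_def by blast
  have urng: "0 \<le> u x \<and> u x \<le> 1" if x: "x \<in> {a..b}" for x
    using x ba by (auto simp: u_def divide_le_eq_1)
  have hb: "\<bar>f' x\<bar> \<le> h x" if x: "x \<in> {a..b}" for x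
  proof -
    have ux: "u x \<in> {0..1}" using urng[OF x] by auto
    have e1: "u x * (b-a) = x - a" using ba by (simp add: u_def)
    have eq: "u x * b + (1 - u x) * a = x"
    proof -
      have "u x * b + (1 - u x) * a = a + u x * (b-a)" by (simp add: algebra_simps)
      then show ?thesis using e1 by simp
    qed
    have "\<bar>f' (u x * b + (1 - u x) * a)\<bar> \<le> u x powr s * \<bar>f' b\<bar> + (1 - u x) powr s * \<bar>f' a\<bar>"
      using sc[of b a "u x"] ab ux by auto
    then show ?thesis unfolding eq by (simp add: h_def A_def B_def mult.commute)
  qed
  define p1 where "p1 = \<alpha>*lam"
  define p2 where "p2 = 1 - lam*(1-\<alpha>)"
  define c where "c = \<alpha>*a + (1-\<alpha>)*b"
  have c_eq: "c = a + (1-\<alpha>)*(b-a)" by (simp add: c_def algebra_simps)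
  have ac: "a \<le> c"
  proof -
    have "0 \<le> (1-\<alpha>)*(b-a)" using al1 ba by (intro mult_nonneg_nonneg) auto
    then show ?thesis using c_eq by simp
  qed
  have cb: "c \<le> b"
  proof -
    have "0 \<le> \<alpha>*(b-a)" using al0 ba by (intro mult_nonneg_nonneg) auto
    moreover have "c = b - \<alpha>*(b-a)" by (simp add: c_def algebra_simps)
    ultimately show ?thesis by simp
  qed
  have ua: "u a = 0" and ub: "u b = 1" using ba by (auto simp: u_def)
  have uc: "u c = 1-\<alpha>" using ba by (simp add: u_def c_eq)
  have p1r: "0 \<le> p1" "p1 \<le> 1" using al0 al1 la0 la1 by (auto simp: p1_def mult_le_one)
  have p2r: "0 \<le> p2" "p2 \<le> 1"
  proof -
    have "lam*(1-\<alpha>) \<le> 1" using al0 al1 la0 la1 by (simp add: mult_le_one)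
    moreover have "0 \<le> lam*(1-\<alpha>)" using al1 la0 by simp
    ultimately show "0 \<le> p2" "p2 \<le> 1" by (auto simp: p2_def)
  qed
  define d1 where "d1 = a + p1*(b-a)"
  define d2 where "d2 = a + p2*(b-a)"
  have ud1: "u d1 = p1" and ud2: "u d2 = p2" using ba by (auto simp: u_def d1_def d2_def)
  have ad1: "a \<le> d1" and ad2: "a \<le> d2" using p1r p2r ba by (auto simp: d1_def d2_def)
  have d1b: "d1 \<le> b" and d2b: "d2 \<le> b"
  proof -
    have "p1*(b-a) \<le> 1*(b-a)" "p2*(b-a) \<le> 1*(b-a)" using p1r p2r ba by (intro mult_right_mono; simp)+
    then show "d1 \<le> b" "d2 \<le> b" by (auto simp: d1_def d2_def)
  qed
  have le_u: "x \<le> y \<longleftrightarrow> u x \<le> u y" for x y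
    using ba by (simp add: u_def divide_le_cancel)
  have K1: "((\<lambda>x. (u x - p1) * f' x) has_integral
      ((u c - p1)*f c - (u a - p1)*f a - (1/(b-a)) * integral {a..c} f)) {a..c}"
    by (rule ibp2[OF u_def ac]) (use der ac cb in auto)
  have K2: "((\<lambda>x. (u x - p2) * f' x) has_integral
      ((u b - p2)*f b - (u c - p2)*f c - (1/(b-a)) * integral {c..b} f)) {c..b}"
    by (rule ibp2[OF u_def cb]) (use der ac cb in auto)
  define V1 where "V1 = (u c - p1)*f c - (u a - p1)*f a - (1/(b-a)) * integral {a..c} f"
  define V2 where "V2 = (u b - p2)*f b - (u c - p2)*f c - (1/(b-a)) * integral {c..b} f"
  have intf: "integral {a..c} f + integral {c..b} f = integral {a..b} f"
    by (rule Henstock_Kurzweil_Integration.integral_combine[OF ac cb integrable_continuous_interval[OF fcont]])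
  have Ieq: "If_fun f lam \<alpha> a b = V1 + V2"
  proof -
    have "If_fun f lam \<alpha> a b = lam*(\<alpha>*f a + (1-\<alpha>)*f b) + (1-lam)*f c - (1/(b-a))*(integral {a..c} f + integral {c..b} f)"
      unfolding If_fun_def c_def[symmetric] intf[symmetric] by (rule refl)
    also have "\<dots> = V1 + V2" unfolding V1_def V2_def ua ub uc p1_def p2_def by (rule ieq_alg)
    finally show ?thesis .
  qed
  have hb1: "\<And>x. x \<in> {a..c} \<Longrightarrow> \<bar>f' x\<bar> \<le> h x"
    by (rule hb) (use ac cb in auto)
  have hb2: "\<And>x. x \<in> {c..b} \<Longrightarrow> \<bar>f' x\<bar> \<le> h x"
    by (rule hb) (use ac cb in auto)
  have B1: "\<bar>V1\<bar> \<le> W" if "((\<lambda>x. \<bar>u x - p1\<bar> * h x) has_integral W) {a..c}" for W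
    by (rule absbound[OF K1[folded V1_def] that hb1])
  have B2: "\<bar>V2\<bar> \<le> W" if "((\<lambda>x. \<bar>u x - p2\<bar> * h x) has_integral W) {c..b}" for W
    by (rule absbound[OF K2[folded V2_def] that hb2])
  have tot: "\<bar>If_fun f lam \<alpha> a b\<bar> \<le> W1 + W2"
    if "((\<lambda>x. \<bar>u x - p1\<bar> * h x) has_integral W1) {a..c}"
       "((\<lambda>x. \<bar>u x - p2\<bar> * h x) has_integral W2) {c..b}" for W1 W2
    using B1[OF that(1)] B2[OF that(2)] Ieq by linarith
  note hdef = h_def
  have Npc: "((\<lambda>x. \<bar>u x - p\<bar> * h x) has_integral -((b-a)*(G s p B A (u y) - G s p B A (u x0)))) {x0..y}"
    if "a \<le> x0" "x0 \<le> y" "y \<le> b" "u y \<le> p" for x0 y p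
    unfolding h_def using neg_piece[OF u_def ab that(2) _ _ s0, of p] urng that by auto
  have Ppc: "((\<lambda>x. \<bar>u x - p\<bar> * h x) has_integral (b-a)*(G s p B A (u y) - G s p B A (u x0))) {x0..y}"
    if "a \<le> x0" "x0 \<le> y" "y \<le> b" "p \<le> u x0" for x0 y p
    unfolding h_def using pos_piece[OF u_def ab that(2) _ _ s0, of p] urng that by auto
  define D where "D = (s+1)*(s+2)"
  have Gz: "G s p B A 0 = Gp (s+1) (s+2) p B A 0 0 1 / D" for p
    using Gconv[OF s0, of 0] by (simp add: D_def)
  have Go: "G s p B A 1 = Gp (s+1) (s+2) p B A 1 1 0 / D" for p
    using Gconv[OF s0, of 1] by (simp add: D_def)
  have Gc: "G s p B A (1-\<alpha>) = Gp (s+1) (s+2) p B A (1-\<alpha>) ((1-\<alpha>) powr s) (\<alpha> powr s) / D" for p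
    using Gconv[OF s0, of "1-\<alpha>"] al0 al1 by (simp add: D_def)
  have Gp1: "G s p B A (\<alpha>*lam) = Gp (s+1) (s+2) p B A (\<alpha>*lam) ((\<alpha>*lam) powr s) ((1-\<alpha>*lam) powr s) / D" for p
    using Gconv[OF s0, of "\<alpha>*lam"] p1r by (simp add: D_def p1_def)
  have e2: "1 - (1 - lam*(1-\<alpha>)) = (1-\<alpha>)*lam" by (simp add: algebra_simps)
  have Gp2: "G s p B A (1 - lam*(1-\<alpha>)) = Gp (s+1) (s+2) p B A (1 - lam*(1-\<alpha>)) ((1 - lam*(1-\<alpha>)) powr s) (((1-\<alpha>)*lam) powr s) / D" for p
    using Gconv[OF s0, of "1 - lam*(1-\<alpha>)" p B A] p2r unfolding e2 by (simp add: D_def p2_def)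
  have C1a: "c1 \<alpha> lam s = c1p (s+1) (s+2) \<alpha> lam ((\<alpha>*lam) powr s) ((1-\<alpha>) powr s) / D"
    using c1conv[OF s0, of \<alpha> lam] p1r al1 by (simp add: D_def p1_def)
  have C2a: "c2 \<alpha> lam s = c2p (s+1) (s+2) \<alpha> lam ((1-\<alpha>*lam) powr s) (\<alpha> powr s) / D"
    using c2conv[OF s0, of \<alpha> lam] p1r al0 by (simp add: D_def p1_def)
  have e3: "1 - (1-\<alpha>)*lam = 1 - lam*(1-\<alpha>)" by (simp add: mult.commute)
  have C2b: "c2 (1-\<alpha>) lam s = c2p (s+1) (s+2) (1-\<alpha>) lam ((1 - lam*(1-\<alpha>)) powr s) ((1-\<alpha>) powr s) / D"
    using c2conv[OF s0, of "1-\<alpha>" lam] p2r al1 unfolding e3 by (simp add: D_def p2_def)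
  have C1b: "c1 (1-\<alpha>) lam s = c1p (s+1) (s+2) (1-\<alpha>) lam (((1-\<alpha>)*lam) powr s) (\<alpha> powr s) / D"
    using c1conv[OF s0, of "1-\<alpha>" lam] al0 al1 la0 by (simp add: D_def)
  have C3a: "c3 \<alpha> lam s = c3p (s+1) (s+2) \<alpha> lam ((1-\<alpha>) powr s) / D"
    using c3conv[OF s0, of \<alpha> lam] al1 by (simp add: D_def)
  have C3b: "c3 (1-\<alpha>) lam s = c3p (s+1) (s+2) (1-\<alpha>) lam (\<alpha> powr s) / D"
    using c3conv[OF s0, of "1-\<alpha>" lam] al0 by (simp add: D_def)
  have C4a: "c4 \<alpha> lam s = c4p (s+1) (s+2) \<alpha> lam (\<alpha> powr s) / D"
    using c4conv[OF s0, of \<alpha> lam] al0 by (simp add: D_def)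
  have C4b: "c4 (1-\<alpha>) lam s = c4p (s+1) (s+2) (1-\<alpha>) lam ((1-\<alpha>) powr s) / D"
    using c4conv[OF s0, of "1-\<alpha>" lam] al1 by (simp add: D_def)
  have nz: "s+1 \<noteq> 0" "s+2 \<noteq> 0" "s+2 = (s+1)+1" using s0 by auto
  note convs = Gz Go Gc Gp1 Gp2 C1a C2a C2b C1b C3a C3b C4a C4b D_def
  show ?thesis
  proof (intro conjI impI)
    assume cnd: "\<alpha> * lam \<le> 1 - \<alpha> \<and> 1 - \<alpha> \<le> 1 - lam * (1 - \<alpha>)"
    have h1: "p1 \<le> 1-\<alpha>" "1-\<alpha> \<le> p2" using cnd by (auto simp: p1_def p2_def)
    have d1c: "d1 \<le> c" by (subst le_u) (use h1 ud1 uc in simp)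
    have cd2: "c \<le> d2" by (subst le_u) (use h1 ud2 uc in simp)
    have W1: "((\<lambda>x. \<bar>u x - p1\<bar> * h x) has_integral
       -((b-a)*(G s p1 B A (u d1) - G s p1 B A (u a))) + (b-a)*(G s p1 B A (u c) - G s p1 B A (u d1))) {a..c}"
      by (rule has_integral_combine[OF ad1 d1c Npc Ppc]) (use ad1 d1c cb ud1 ac in auto)
    have W2: "((\<lambda>x. \<bar>u x - p2\<bar> * h x) has_integral
       -((b-a)*(G s p2 B A (u d2) - G s p2 B A (u c))) + (b-a)*(G s p2 B A (u b) - G s p2 B A (u d2))) {c..b}"
      by (rule has_integral_combine[OF cd2 d2b Npc Ppc]) (use cd2 d2b ac ud2 in auto)
    have sumeq: "-((b-a)*(G s p1 B A (u d1) - G s p1 B A (u a))) + (b-a)*(G s p1 B A (u c) - G s p1 B A (u d1))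
        + (-((b-a)*(G s p2 B A (u d2) - G s p2 B A (u c))) + (b-a)*(G s p2 B A (u b) - G s p2 B A (u d2)))
       = (b-a) * (-(G s p1 B A p1 - G s p1 B A 0) + (G s p1 B A (1-\<alpha>) - G s p1 B A p1)
           - (G s p2 B A p2 - G s p2 B A (1-\<alpha>)) + (G s p2 B A 1 - G s p2 B A p2))"
      unfolding ud1 ud2 ua ub uc by (simp add: algebra_simps)
    have coreeq: "(-(G s p1 B A p1 - G s p1 B A 0) + (G s p1 B A (1-\<alpha>) - G s p1 B A p1)
           - (G s p2 B A p2 - G s p2 B A (1-\<alpha>)) + (G s p2 B A 1 - G s p2 B A p2)) = (c1 \<alpha> lam s + c2 (1 - \<alpha>) lam s) * B + (c2 \<alpha> lam s + c1 (1 - \<alpha>) lam s) * A"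
      unfolding p1_def p2_def convs by (rule core_i[OF nz])
    have "\<bar>If_fun f lam \<alpha> a b\<bar> \<le> (b-a) * ((c1 \<alpha> lam s + c2 (1 - \<alpha>) lam s) * B + (c2 \<alpha> lam s + c1 (1 - \<alpha>) lam s) * A)"
      using tot[OF W1 W2] unfolding sumeq coreeq .
    then show "\<bar>If_fun f lam \<alpha> a b\<bar> \<le> (b - a) *
             ((c1 \<alpha> lam s + c2 (1 - \<alpha>) lam s) * \<bar>f' b\<bar> + (c2 \<alpha> lam s + c1 (1 - \<alpha>) lam s) * \<bar>f' a\<bar>)"
      by (simp add: A_def B_def)
  next
    assume cnd: "\<alpha> * lam \<le> 1 - lam * (1 - \<alpha>) \<and> 1 - lam * (1 - \<alpha>) \<le> 1 - \<alpha>"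
    have h1: "p1 \<le> 1-\<alpha>" "p2 \<le> 1-\<alpha>" using cnd by (auto simp: p1_def p2_def)
    have d1c: "d1 \<le> c" by (subst le_u) (use h1 ud1 uc in simp)
    have W1: "((\<lambda>x. \<bar>u x - p1\<bar> * h x) has_integral
       -((b-a)*(G s p1 B A (u d1) - G s p1 B A (u a))) + (b-a)*(G s p1 B A (u c) - G s p1 B A (u d1))) {a..c}"
      by (rule has_integral_combine[OF ad1 d1c Npc Ppc]) (use ad1 d1c cb ud1 ac in auto)
    have W2: "((\<lambda>x. \<bar>u x - p2\<bar> * h x) has_integral (b-a)*(G s p2 B A (u b) - G s p2 B A (u c))) {c..b}"
      by (rule Ppc) (use cb ac uc h1 in auto)
    have sumeq: "-((b-a)*(G s p1 B A (u d1) - G s p1 B A (u a))) + (b-a)*(G s p1 B A (u c) - G s p1 B A (u d1))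
        + (b-a)*(G s p2 B A (u b) - G s p2 B A (u c))
       = (b-a) * (-(G s p1 B A p1 - G s p1 B A 0) + (G s p1 B A (1-\<alpha>) - G s p1 B A p1)
           + (G s p2 B A 1 - G s p2 B A (1-\<alpha>)))"
      unfolding ud1 ud2 ua ub uc by (simp add: algebra_simps)
    have coreeq: "(-(G s p1 B A p1 - G s p1 B A 0) + (G s p1 B A (1-\<alpha>) - G s p1 B A p1)
           + (G s p2 B A 1 - G s p2 B A (1-\<alpha>))) = (c1 \<alpha> lam s + c4 (1 - \<alpha>) lam s) * B + (c2 \<alpha> lam s + c3 (1 - \<alpha>) lam s) * A"
      unfolding p1_def p2_def convs by (rule core_ii[OF nz])
    have "\<bar>If_fun f lam \<alpha> a b\<bar> \<le> (b-a) * ((c1 \<alpha> lam s + c4 (1 - \<alpha>) lam s) * B + (c2 \<alpha> lam s + c3 (1 - \<alpha>) lam s) * A)"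
      using tot[OF W1 W2] unfolding sumeq coreeq .
    then show "\<bar>If_fun f lam \<alpha> a b\<bar> \<le> (b - a) *
             ((c1 \<alpha> lam s + c4 (1 - \<alpha>) lam s) * \<bar>f' b\<bar> + (c2 \<alpha> lam s + c3 (1 - \<alpha>) lam s) * \<bar>f' a\<bar>)"
      by (simp add: A_def B_def)
  next
    assume cnd: "1 - \<alpha> \<le> \<alpha> * lam \<and> \<alpha> * lam \<le> 1 - lam * (1 - \<alpha>)"
    have h1: "1-\<alpha> \<le> p1" "1-\<alpha> \<le> p2"
    proof -
      show "1-\<alpha> \<le> p1" using cnd by (simp add: p1_def)
      have "p1 \<le> p2" using cnd by (simp add: p1_def p2_def)
      then show "1-\<alpha> \<le> p2" using cnd by (simp add: p1_def)
    qed
    have cd2: "c \<le> d2" by (subst le_u) (use h1 ud2 uc in simp)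
    have W1: "((\<lambda>x. \<bar>u x - p1\<bar> * h x) has_integral -((b-a)*(G s p1 B A (u c) - G s p1 B A (u a)))) {a..c}"
      by (rule Npc) (use cb ac uc h1 in auto)
    have W2: "((\<lambda>x. \<bar>u x - p2\<bar> * h x) has_integral
       -((b-a)*(G s p2 B A (u d2) - G s p2 B A (u c))) + (b-a)*(G s p2 B A (u b) - G s p2 B A (u d2))) {c..b}"
      by (rule has_integral_combine[OF cd2 d2b Npc Ppc]) (use cd2 d2b ac ud2 in auto)
    have sumeq: "-((b-a)*(G s p1 B A (u c) - G s p1 B A (u a)))
        + (-((b-a)*(G s p2 B A (u d2) - G s p2 B A (u c))) + (b-a)*(G s p2 B A (u b) - G s p2 B A (u d2)))
       = (b-a) * (-(G s p1 B A (1-\<alpha>) - G s p1 B A 0)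
           - (G s p2 B A p2 - G s p2 B A (1-\<alpha>)) + (G s p2 B A 1 - G s p2 B A p2))"
      unfolding ud1 ud2 ua ub uc by (simp add: algebra_simps)
    have coreeq: "(-(G s p1 B A (1-\<alpha>) - G s p1 B A 0)
           - (G s p2 B A p2 - G s p2 B A (1-\<alpha>)) + (G s p2 B A 1 - G s p2 B A p2)) = (c3 \<alpha> lam s + c2 (1 - \<alpha>) lam s) * B + (c4 \<alpha> lam s + c1 (1 - \<alpha>) lam s) * A"
      unfolding p1_def p2_def convs by (rule core_iii[OF nz])
    have "\<bar>If_fun f lam \<alpha> a b\<bar> \<le> (b-a) * ((c3 \<alpha> lam s + c2 (1 - \<alpha>) lam s) * B + (c4 \<alpha> lam s + c1 (1 - \<alpha>) lam s) * A)"
      using tot[OF W1 W2] unfolding sumeq coreeq .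
    then show "\<bar>If_fun f lam \<alpha> a b\<bar> \<le> (b - a) *
             ((c3 \<alpha> lam s + c2 (1 - \<alpha>) lam s) * \<bar>f' b\<bar> + (c4 \<alpha> lam s + c1 (1 - \<alpha>) lam s) * \<bar>f' a\<bar>)"
      by (simp add: A_def B_def)
  qed
qed

end
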